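(* Let $X$ be a nonempty set, $f:X\to X$ a function, and $\tau_2$ the fuzzy topology on $X$ defined below. Then $f:(X,\tau_2)\to(X,\tau_2)$ is open if and only if $f$ is onto.
   Context: A fuzzy subset of $X$ is a function $\mu:X\to[0,1]$; union is the pointwise supremum, intersection the pointwise minimum; $\emptyset$ is the constant $0$ and $X$ the constant $1$. A fuzzy topology is a family of fuzzy subsets containing $\emptyset$ and $X$, closed under arbitrary unions and finite intersections; the topology generated by a base $\mathbb{B}$ consists of $\emptyset$ and all unions of subfamilies of $\mathbb{B}$. $\mathbb{N}=\{1,2,\dots\}$, $f^0=\mathrm{id}_X$, $f^{n+1}=f^n\circ f$. Definition of $\tau_2$: $J_0=\bigcap_{n\in\mathbb{N}} f^n(X)$, $J_n=f^{n-1}(X)\setminus f^n(X)$ for $n\in\mathbb{N}$; for $m\in\mathbb{N}$, $\mu_{K_m}(x)=\min\{1,n/m\}$ if $x\in J_n$ with $n\ge1$, and $\mu_{K_m}(x)=1$ otherwise; $\tau_2$ is generated by the base $\{K_m:m\in\mathbb{N}\}$. The image of a fuzzy set $A$ is $\mu_{f(A)}(y)=\sup\{\mu_A(x):f(x)=y\}$, and $0$ if $y\notin f(X)$. $f$ is open if $f(U)$ is open for every open fuzzy set $U$. *)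

theory Defs
  imports Main Complex_Main
begin

text \<open>Fuzzy subsets of the type 'a (the ambient set X = UNIV) are functions 'a => real
  with values in [0,1].  Union = pointwise supremum.\<close>

definition fuzzy_empty :: "'a \<Rightarrow> real" where
  "fuzzy_empty = (\<lambda>x. 0)"

definition fuzzy_Union :: "('a \<Rightarrow> real) set \<Rightarrow> ('a \<Rightarrow> real)" where
  "fuzzy_Union B = (\<lambda>x. if B = {} then 0 else (SUP \<mu>\<in>B. \<mu> x))"

definition generated_topology :: "('a \<Rightarrow> real) set \<Rightarrow> ('a \<Rightarrow> real) set" where
  "generated_topology Base = {fuzzy_empty} \<union> {fuzzy_Union B | B. B \<subseteq> Base}"

definition J0 :: "('a \<Rightarrow> 'a) \<Rightarrow> 'a set" where
  "J0 f = (\<Inter>n\<in>{1..}. range (f ^^ n))"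

definition J :: "('a \<Rightarrow> 'a) \<Rightarrow> nat \<Rightarrow> 'a set" where
  "J f n = range (f ^^ (n - 1)) - range (f ^^ n)"

definition K :: "('a \<Rightarrow> 'a) \<Rightarrow> nat \<Rightarrow> 'a \<Rightarrow> real" where
  "K f m x = (if \<exists>n\<ge>1. x \<in> J f n
              then min 1 (real (THE n. n \<ge> 1 \<and> x \<in> J f n) / real m)
              else 1)"

definition tau2 :: "('a \<Rightarrow> 'a) \<Rightarrow> ('a \<Rightarrow> real) set" where
  "tau2 f = generated_topology {K f m | m. m \<ge> 1}"

definition fuzzy_image :: "('a \<Rightarrow> 'b) \<Rightarrow> ('a \<Rightarrow> real) \<Rightarrow> ('b \<Rightarrow> real)" where
  "fuzzy_image f A = (\<lambda>y. if y \<in> range f then (SUP x\<in>f -` {y}. A x) else 0)"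

definition fuzzy_open_map :: "('a \<Rightarrow> real) set \<Rightarrow> ('b \<Rightarrow> real) set \<Rightarrow> ('a \<Rightarrow> 'b) \<Rightarrow> bool" where
  "fuzzy_open_map T S f = (\<forall>U\<in>T. fuzzy_image f U \<in> S)"

end

theory Submission
  imports Defs
begin

lemma range_funpow_mono:
  fixes f :: "'a \<Rightarrow> 'a"
  assumes "b \<le> a" shows "range (f ^^ a) \<subseteq> range (f ^^ b)"
proof -
  have "f ^^ a = f ^^ b \<circ> f ^^ (a - b)" using assms funpow_add[of b "a-b" f] by simp
  then show ?thesis by auto
qed

lemma J_unique:
  fixes f :: "'a \<Rightarrow> 'a"
  assumes "n \<ge> 1" "k \<ge> 1" "x \<in> J f n" "x \<in> J f k" shows "n = k"
proof (rule ccontr)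
  assume "n \<noteq> k"
  have n1: "x \<in> range (f ^^ (n - 1))" "x \<notin> range (f ^^ n)" using assms(3) unfolding J_def by simp_all
  have k1: "x \<in> range (f ^^ (k - 1))" "x \<notin> range (f ^^ k)" using assms(4) unfolding J_def by simp_all
  consider "n < k" | "k < n" using \<open>n \<noteq> k\<close> by linarith
  then show False
  proof cases
    case 1
    then have "range (f ^^ (k-1)) \<subseteq> range (f ^^ n)" by (intro range_funpow_mono) simp
    then show False using n1 k1 by blast
  next
    case 2
    then have "range (f ^^ (n-1)) \<subseteq> range (f ^^ k)" by (intro range_funpow_mono) simp
    then show False using n1 k1 by blast
  qed
qed

lemma THE_J:
  fixes f :: "'a \<Rightarrow> 'a"
  assumes "n \<ge> 1" "x \<in> J f n" shows "(THE n. n \<ge> 1 \<and> x \<in> J f n) = n"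
proof (rule the_equality)
  show "n \<ge> 1 \<and> x \<in> J f n" using assms by (rule conjI)
next
  fix k assume "k \<ge> 1 \<and> x \<in> J f k"
  then show "k = n" using J_unique[of k n x f] assms by blast
qed

lemma K1: "K f 1 = (\<lambda>x. 1)"
proof
  fix x
  show "K f 1 x = 1"
  proof (cases "\<exists>n\<ge>1. x \<in> J f n")
    case True
    then obtain n where n: "n \<ge> 1" "x \<in> J f n" by blast
    have "(THE n. n \<ge> 1 \<and> x \<in> J f n) = n" using THE_J[OF n] .
    then have "K f 1 x = min 1 (real n)" unfolding K_def using True by simp
    then show ?thesis using n(1) by simp
  next
    case False then show ?thesis unfolding K_def by (simp only: if_False)
  qed
qed

lemma surj_K:
  fixes f :: "'a \<Rightarrow> 'a"
  assumes "surj f" shows "K f m = (\<lambda>x. 1)"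
proof
  fix x
  have "J f n = {}" for n
  proof -
    have "range (f ^^ n) = UNIV" using surj_fn[OF assms] by simp
    then show ?thesis unfolding J_def by simp
  qed
  then have "\<not> (\<exists>n\<ge>1. x \<in> J f n)" by simp
  then show "K f m x = 1" unfolding K_def by (simp only: if_False)
qed

theorem theorem2p10:
  fixes f :: "'a \<Rightarrow> 'a"
  shows "fuzzy_open_map (tau2 f) (tau2 f) f \<longleftrightarrow> surj f"
proof
  assume op: "fuzzy_open_map (tau2 f) (tau2 f) f"
  show "surj f"
  proof (rule ccontr)
    assume ns: "\<not> surj f"
    then obtain y where y: "y \<notin> range f" by auto
    have "K f 1 \<in> tau2 f" unfolding tau2_def generated_topology_def
      by (rule UnI2, rule CollectI, rule exI[of _ "{K f 1}"]) (auto simp: fuzzy_Union_def)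
    then have "fuzzy_image f (K f 1) \<in> tau2 f" using op unfolding fuzzy_open_map_def by blast
    then have inT: "fuzzy_image f (\<lambda>x. 1) \<in> tau2 f" by (simp only: K1)
    have img: "fuzzy_image f (\<lambda>x. 1) y = 0" using y by (simp add: fuzzy_image_def)
    obtain z where "z \<in> range f" by auto
    then have h: "fuzzy_image f (\<lambda>x. 1) z = 1"
    proof -
      assume "z \<in> range f"
      then have "f -` {z} \<noteq> {}" by auto
      then show ?thesis using \<open>z \<in> range f\<close> by (simp add: fuzzy_image_def cSUP_const)
    qed
    have ne: "fuzzy_image f (\<lambda>x. 1) \<noteq> fuzzy_empty"
    proof
      assume "fuzzy_image f (\<lambda>x. 1) = fuzzy_empty"
      then have "fuzzy_image f (\<lambda>x. 1) z = 0" by (simp add: fuzzy_empty_def)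
      then show False using h by simp
    qed
    have "fuzzy_image f (\<lambda>x. 1) \<in> {fuzzy_empty} \<union> {fuzzy_Union B | B. B \<subseteq> {K f m | m. m \<ge> 1}}"
      using inT unfolding tau2_def generated_topology_def .
    then have "fuzzy_image f (\<lambda>x. 1) \<in> {fuzzy_Union B | B. B \<subseteq> {K f m | m. m \<ge> 1}}"
      using ne by (simp only: Un_iff singleton_iff simp_thms)
    then have "\<exists>B. fuzzy_image f (\<lambda>x. 1) = fuzzy_Union B \<and> B \<subseteq> {K f m | m. m \<ge> 1}"
      by (simp only: mem_Collect_eq)
    then obtain B where B: "B \<subseteq> {K f m | m. m \<ge> 1}" "fuzzy_image f (\<lambda>x. 1) = fuzzy_Union B"
      by (elim exE conjE) (rule that)
    have "B \<noteq> {}"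
    proof
      assume "B = {}"
      then have "fuzzy_Union B = fuzzy_empty" by (simp add: fuzzy_Union_def fuzzy_empty_def)
      moreover have "fuzzy_Union B \<noteq> fuzzy_empty" using ne unfolding B(2) .
      ultimately show False by (rule notE[rotated])
    qed
    then obtain \<mu> where "\<mu> \<in> B" by blast
    then have "\<mu> \<in> {K f m | m. m \<ge> 1}" using B(1) by (rule subsetD[rotated])
    then have "\<exists>m. \<mu> = K f m \<and> m \<ge> 1" by (simp only: mem_Collect_eq)
    then obtain m where mm: "\<mu> = K f m" "m \<ge> 1" by (elim exE conjE)
    have m: "m \<ge> 1" "K f m \<in> B" using mm \<open>\<mu> \<in> B\<close> by simp_all
    have yJ: "y \<in> J f 1" using y by (simp add: J_def)
    have ex: "\<exists>n\<ge>1. y \<in> J f n" using yJ by (intro exI[of _ 1]) simp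
    have th: "(THE n. n\<ge>1 \<and> y \<in> J f n) = 1" by (rule THE_J[OF _ yJ]) simp
    have "K f m y = min 1 (1 / real m)" unfolding K_def using ex th by simp
    then have Kpos: "K f m y > 0" using m(1) by simp
    have bdd: "bdd_above ((\<lambda>\<mu>. \<mu> y) ` B)"
    proof (rule bdd_aboveI)
      fix t assume "t \<in> (\<lambda>\<mu>. \<mu> y) ` B"
      then obtain \<nu> where "\<nu> \<in> B" "t = \<nu> y" by (elim imageE)
      then have "\<nu> \<in> {K f m | m. m \<ge> 1}" using B(1) by (simp add: subset_iff)
      then obtain k where "\<nu> = K f k" by (auto simp only: mem_Collect_eq)
      then show "t \<le> 1" using \<open>t = \<nu> y\<close> unfolding K_def by simp
    qed
    have "K f m y \<le> (SUP \<mu>\<in>B. \<mu> y)" by (rule cSUP_upper[OF m(2) bdd])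
    then have "fuzzy_Union B y > 0" using Kpos \<open>B \<noteq> {}\<close> by (simp add: fuzzy_Union_def)
    then show False using B(2) img by simp
  qed
next
  assume s: "surj f"
  have T: "tau2 f \<subseteq> {fuzzy_empty, (\<lambda>x. 1)}"
  proof
    fix U assume "U \<in> tau2 f"
    then consider "U = fuzzy_empty" | B where "B \<subseteq> {K f m | m. m \<ge> 1}" "U = fuzzy_Union B"
      unfolding tau2_def generated_topology_def by blast
    then show "U \<in> {fuzzy_empty, (\<lambda>x. 1)}"
    proof cases
      case (2 B)
      then have "B \<subseteq> {(\<lambda>x. 1)}" using surj_K[OF s] by blast
      then have "B = {} \<or> B = {(\<lambda>x. 1)}" by blast
      then show ?thesis
      proof
        assume "B = {}"
        then have "U = fuzzy_empty" using 2(2) by (simp add: fuzzy_Union_def fuzzy_empty_def)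
        then show ?thesis by simp
      next
        assume "B = {(\<lambda>x. 1)}"
        then have "U = (\<lambda>x. 1)" using 2(2) by (simp add: fuzzy_Union_def)
        then show ?thesis by simp
      qed
    qed simp
  qed
  have "fuzzy_image f U \<in> tau2 f" if "U \<in> tau2 f" for U
  proof -
    have "K f 1 \<in> tau2 f" unfolding tau2_def generated_topology_def
      by (rule UnI2, rule CollectI, rule exI[of _ "{K f 1}"]) (auto simp: fuzzy_Union_def)
    hence one: "(\<lambda>x. 1) \<in> tau2 f" using K1[of f] by simp
    have zero: "fuzzy_empty \<in> tau2 f" unfolding tau2_def generated_topology_def by auto
    have ne: "f -` {y} \<noteq> {}" for y
    proof -
      obtain x where "y = f x" using surjD[OF s] by blast
      then have "x \<in> f -` {y}" by simp
      then show ?thesis by blast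
    qed
    from that T have "U \<in> {fuzzy_empty, (\<lambda>x. 1)}" by (rule subsetD[rotated])
    then have "U = fuzzy_empty \<or> U = (\<lambda>x. 1)" by (simp only: insert_iff empty_iff simp_thms)
    then show ?thesis
    proof
      assume "U = fuzzy_empty"
      then have "fuzzy_image f U = fuzzy_empty"
        unfolding fuzzy_image_def fuzzy_empty_def using ne by (intro ext) (simp add: cSUP_const)
      then show ?thesis using zero by simp
    next
      assume "U = (\<lambda>x. 1)"
      then have "fuzzy_image f U = (\<lambda>x. 1)"
        unfolding fuzzy_image_def using ne s by (intro ext) (simp add: cSUP_const)
      then show ?thesis using one by simp
    qed
  qed
  then show "fuzzy_open_map (tau2 f) (tau2 f) f" unfolding fuzzy_open_map_def by blast
qed

end
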